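(* Let $A=\sum\{A_{ij}\mid i,j\in I\}$ be a generalized matrix ring and let $D=\sum\{D_{ij}\mid i,j\in I\}$ be a gm ideal of $A$ with $D_{ij}\subseteq r_n(A_{ij})$ for all $i,j\in I$. Then every element of $D$ is von Neumann regular in $A$; in particular $D\subseteq r_n(A)$.
   Context: A generalized matrix (gm) ring: $I$ is a nonempty index set; for $i,j\in I$, $A_{ij}$ are additive groups with biadditive maps $A_{ij}\times A_{jl}\to A_{il}$, $(x,y)\mapsto xy$, which are associative ($(xy)z=x(yz)$ whenever defined). $A$ is the external direct sum of the $A_{ij}$ (finitely many nonzero entries) with multiplication $(xy)_{ij}=\sum_k x_{ik}y_{kj}$. A gm ideal is an ideal $B$ of $A$ of the form $B=\sum\{B_{ij}\}$ with $B_{ij}\subseteq A_{ij}$. Each $A_{ij}$ is regarded as a $\Gamma$-ring with $\Gamma=A_{ji}$ (an "$A_{ji}$-ring"): an ideal of it is an additive subgroup $B\subseteq A_{ij}$ with $A_{ij}A_{ji}B\subseteq B$ and $BA_{ji}A_{ij}\subseteq B$; an element $x\in A_{ij}$ is von Neumann regular if $x=xyx$ for some $y\in A_{ji}$; $r_n(A_{ij})$ is the largest ideal of the $A_{ji}$-ring $A_{ij}$ all of whose elements are von Neumann regular. For the ring $A$, $x$ is von Neumann regular if $x=xyx$ for some $y\in A$, and $r_n(A)$ is the largest ideal of $A$ consisting of von Neumann regular elements. *)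

theory Defs
  imports Main
begin

text \<open>All component groups A i j are modelled as additive subgroups of one ambient
  abelian group 'a (no loss of generality: embed them into their direct sum).
  m i j l :: A_ij \<times> A_jl \<rightarrow> A_il is the biadditive, associative multiplication.\<close>

definition add_subgroup :: "'a::ab_group_add set \<Rightarrow> bool" where
  "add_subgroup B \<longleftrightarrow> 0 \<in> B \<and> (\<forall>x\<in>B. \<forall>y\<in>B. x + y \<in> B) \<and> (\<forall>x\<in>B. - x \<in> B)"

definition gm_ring :: "'i set \<Rightarrow> ('i \<Rightarrow> 'i \<Rightarrow> 'a::ab_group_add set)
    \<Rightarrow> ('i \<Rightarrow> 'i \<Rightarrow> 'i \<Rightarrow> 'a \<Rightarrow> 'a \<Rightarrow> 'a) \<Rightarrow> bool" where
  "gm_ring I A m \<longleftrightarrow>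
     I \<noteq> {} \<and>
     (\<forall>i\<in>I. \<forall>j\<in>I. add_subgroup (A i j)) \<and>
     (\<forall>i\<in>I. \<forall>j\<in>I. \<forall>l\<in>I. \<forall>x\<in>A i j. \<forall>y\<in>A j l. m i j l x y \<in> A i l) \<and>
     (\<forall>i\<in>I. \<forall>j\<in>I. \<forall>l\<in>I. \<forall>x\<in>A i j. \<forall>x'\<in>A i j. \<forall>y\<in>A j l.
        m i j l (x + x') y = m i j l x y + m i j l x' y) \<and>
     (\<forall>i\<in>I. \<forall>j\<in>I. \<forall>l\<in>I. \<forall>x\<in>A i j. \<forall>y\<in>A j l. \<forall>y'\<in>A j l.
        m i j l x (y + y') = m i j l x y + m i j l x y') \<and>
     (\<forall>i\<in>I. \<forall>j\<in>I. \<forall>k\<in>I. \<forall>l\<in>I. \<forall>x\<in>A i j. \<forall>y\<in>A j k. \<forall>z\<in>A k l.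
        m i k l (m i j k x y) z = m i j l x (m j k l y z))"

definition gm_carrier :: "'i set \<Rightarrow> ('i \<Rightarrow> 'i \<Rightarrow> 'a::ab_group_add set) \<Rightarrow> ('i \<Rightarrow> 'i \<Rightarrow> 'a) set" where
  "gm_carrier I A = {x. (\<forall>i j. if i \<in> I \<and> j \<in> I then x i j \<in> A i j else x i j = 0)
                        \<and> finite {(i, j). x i j \<noteq> 0}}"

definition gm_add :: "('i \<Rightarrow> 'i \<Rightarrow> 'a::ab_group_add) \<Rightarrow> ('i \<Rightarrow> 'i \<Rightarrow> 'a) \<Rightarrow> 'i \<Rightarrow> 'i \<Rightarrow> 'a" where
  "gm_add x y = (\<lambda>i j. x i j + y i j)"

definition gm_neg :: "('i \<Rightarrow> 'i \<Rightarrow> 'a::ab_group_add) \<Rightarrow> 'i \<Rightarrow> 'i \<Rightarrow> 'a" where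
  "gm_neg x = (\<lambda>i j. - x i j)"

definition gm_zero :: "'i \<Rightarrow> 'i \<Rightarrow> 'a::ab_group_add" where
  "gm_zero = (\<lambda>i j. 0)"

text \<open>(xy)_ij = \<Sum>_k x_ik y_kj; the sum is over the finitely many k with x i k \<noteq> 0
  (the other terms vanish by biadditivity).\<close>

definition gm_mult :: "'i set \<Rightarrow> ('i \<Rightarrow> 'i \<Rightarrow> 'i \<Rightarrow> 'a \<Rightarrow> 'a \<Rightarrow> 'a::ab_group_add)
    \<Rightarrow> ('i \<Rightarrow> 'i \<Rightarrow> 'a) \<Rightarrow> ('i \<Rightarrow> 'i \<Rightarrow> 'a) \<Rightarrow> 'i \<Rightarrow> 'i \<Rightarrow> 'a" where
  "gm_mult I m x y = (\<lambda>i j. if i \<in> I \<and> j \<in> I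
       then (\<Sum>k\<in>{k\<in>I. x i k \<noteq> 0}. m i k j (x i k) (y k j)) else 0)"

definition gm_ideal :: "'i set \<Rightarrow> ('i \<Rightarrow> 'i \<Rightarrow> 'a::ab_group_add set)
    \<Rightarrow> ('i \<Rightarrow> 'i \<Rightarrow> 'i \<Rightarrow> 'a \<Rightarrow> 'a \<Rightarrow> 'a) \<Rightarrow> ('i \<Rightarrow> 'i \<Rightarrow> 'a) set \<Rightarrow> bool" where
  "gm_ideal I A m B \<longleftrightarrow> B \<subseteq> gm_carrier I A \<and> gm_zero \<in> B \<and>
     (\<forall>x\<in>B. \<forall>y\<in>B. gm_add x y \<in> B) \<and> (\<forall>x\<in>B. gm_neg x \<in> B) \<and>
     (\<forall>a\<in>gm_carrier I A. \<forall>x\<in>B. gm_mult I m a x \<in> B \<and> gm_mult I m x a \<in> B)"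

definition gm_vn_regular :: "'i set \<Rightarrow> ('i \<Rightarrow> 'i \<Rightarrow> 'a::ab_group_add set)
    \<Rightarrow> ('i \<Rightarrow> 'i \<Rightarrow> 'i \<Rightarrow> 'a \<Rightarrow> 'a \<Rightarrow> 'a) \<Rightarrow> ('i \<Rightarrow> 'i \<Rightarrow> 'a) \<Rightarrow> bool" where
  "gm_vn_regular I A m x \<longleftrightarrow>
     (\<exists>y\<in>gm_carrier I A. x = gm_mult I m (gm_mult I m x y) x)"

text \<open>r_n(A): the largest ideal consisting of von Neumann regular elements,
  i.e. the union of all such ideals.\<close>

definition gm_rn :: "'i set \<Rightarrow> ('i \<Rightarrow> 'i \<Rightarrow> 'a::ab_group_add set)
    \<Rightarrow> ('i \<Rightarrow> 'i \<Rightarrow> 'i \<Rightarrow> 'a \<Rightarrow> 'a \<Rightarrow> 'a) \<Rightarrow> ('i \<Rightarrow> 'i \<Rightarrow> 'a) set" where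
  "gm_rn I A m = \<Union>{B. gm_ideal I A m B \<and> (\<forall>x\<in>B. gm_vn_regular I A m x)}"

text \<open>A_ij as an A_ji-ring (Gamma-ring).\<close>

definition comp_ideal :: "('i \<Rightarrow> 'i \<Rightarrow> 'a::ab_group_add set)
    \<Rightarrow> ('i \<Rightarrow> 'i \<Rightarrow> 'i \<Rightarrow> 'a \<Rightarrow> 'a \<Rightarrow> 'a) \<Rightarrow> 'i \<Rightarrow> 'i \<Rightarrow> 'a set \<Rightarrow> bool" where
  "comp_ideal A m i j B \<longleftrightarrow> B \<subseteq> A i j \<and> add_subgroup B \<and>
     (\<forall>a\<in>A i j. \<forall>g\<in>A j i. \<forall>b\<in>B. m i i j (m i j i a g) b \<in> B) \<and>
     (\<forall>b\<in>B. \<forall>g\<in>A j i. \<forall>a\<in>A i j. m i i j (m i j i b g) a \<in> B)"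

definition comp_vn_regular :: "('i \<Rightarrow> 'i \<Rightarrow> 'a::ab_group_add set)
    \<Rightarrow> ('i \<Rightarrow> 'i \<Rightarrow> 'i \<Rightarrow> 'a \<Rightarrow> 'a \<Rightarrow> 'a) \<Rightarrow> 'i \<Rightarrow> 'i \<Rightarrow> 'a \<Rightarrow> bool" where
  "comp_vn_regular A m i j x \<longleftrightarrow> (\<exists>y\<in>A j i. x = m i i j (m i j i x y) x)"

definition comp_rn :: "('i \<Rightarrow> 'i \<Rightarrow> 'a::ab_group_add set)
    \<Rightarrow> ('i \<Rightarrow> 'i \<Rightarrow> 'i \<Rightarrow> 'a \<Rightarrow> 'a \<Rightarrow> 'a) \<Rightarrow> 'i \<Rightarrow> 'i \<Rightarrow> 'a set" where
  "comp_rn A m i j = \<Union>{B. comp_ideal A m i j B \<and> (\<forall>x\<in>B. comp_vn_regular A m i j x)}"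

definition gm_sum_set :: "'i set \<Rightarrow> ('i \<Rightarrow> 'i \<Rightarrow> 'a::ab_group_add set)
    \<Rightarrow> ('i \<Rightarrow> 'i \<Rightarrow> 'a set) \<Rightarrow> ('i \<Rightarrow> 'i \<Rightarrow> 'a) set" where
  "gm_sum_set I A D = {x \<in> gm_carrier I A. \<forall>i\<in>I. \<forall>j\<in>I. x i j \<in> D i j}"

end

theory Submission
  imports Defs "HOL-Library.Function_Algebras"
begin
locale prering =
  fixes R :: "'b::ab_group_add set" and M :: "'b \<Rightarrow> 'b \<Rightarrow> 'b"
  assumes add_cl: "a\<in>R \<Longrightarrow> b\<in>R \<Longrightarrow> a+b\<in>R"
    and neg_cl: "a\<in>R \<Longrightarrow> -a\<in>R"
    and mult_cl: "a\<in>R \<Longrightarrow> b\<in>R \<Longrightarrow> M a b\<in>R"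
    and distl: "a\<in>R \<Longrightarrow> b\<in>R \<Longrightarrow> c\<in>R \<Longrightarrow> M (a+b) c = M a c + M b c"
    and distr: "a\<in>R \<Longrightarrow> b\<in>R \<Longrightarrow> c\<in>R \<Longrightarrow> M a (b+c) = M a b + M a c"
    and assoc: "a\<in>R \<Longrightarrow> b\<in>R \<Longrightarrow> c\<in>R \<Longrightarrow> M (M a b) c = M a (M b c)"
begin
lemma diff_cl: "a\<in>R \<Longrightarrow> b\<in>R \<Longrightarrow> a-b\<in>R"
  using add_cl neg_cl by (metis diff_conv_add_uminus)
lemma negl: "a\<in>R \<Longrightarrow> c\<in>R \<Longrightarrow> M (-a) c = - M a c"
  using distl[of a "-a" c] neg_cl distl[of 0 0 c] add_cl
  by (metis add.right_inverse add_cancel_right_right add_right_cancel neg_eq_iff_add_eq_0)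
lemma negr: "a\<in>R \<Longrightarrow> c\<in>R \<Longrightarrow> M c (-a) = - M c a"
  using distr[of c a "-a"] neg_cl distr[of c 0 0] add_cl
  by (metis add.right_inverse add_cancel_right_right add_right_cancel neg_eq_iff_add_eq_0)
lemma diffl: "a\<in>R \<Longrightarrow> b\<in>R \<Longrightarrow> c\<in>R \<Longrightarrow> M (a-b) c = M a c - M b c"
  using distl[of a "-b" c] negl[of b c] neg_cl[of b] by simp
lemma diffr: "a\<in>R \<Longrightarrow> b\<in>R \<Longrightarrow> c\<in>R \<Longrightarrow> M c (a-b) = M c a - M c b"
  using distr[of c a "-b"] negr[of b c] neg_cl[of b] by simp

lemma reg_lift:
  assumes a: "a\<in>R" and y: "y\<in>R" and w: "w\<in>R"
    and z: "a - M (M a y) a = M (M (a - M (M a y) a) w) (a - M (M a y) a)"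
  shows "\<exists>y'\<in>R. a = M (M a y') a"
proof -
  let ?y = "y + w - M (M w a) y - M (M y a) w + M (M (M (M y a) w) a) y"
  have cl: "?y \<in> R" by (intro add_cl diff_cl mult_cl a y w)
  have "M (M a ?y) a = a"
    using z a y w
    by (simp add: distl distr diffl diffr mult_cl add_cl diff_cl assoc algebra_simps)
  with cl show ?thesis by metis
qed
end
locale gmr =
  fixes I :: "'i set" and A :: "'i \<Rightarrow> 'i \<Rightarrow> 'a::ab_group_add set"
    and m :: "'i \<Rightarrow> 'i \<Rightarrow> 'i \<Rightarrow> 'a \<Rightarrow> 'a \<Rightarrow> 'a"
  assumes gm: "gm_ring I A m"
begin

abbreviation "C \<equiv> gm_carrier I A"
abbreviation "mu \<equiv> gm_mult I m"

lemma sub: "i\<in>I \<Longrightarrow> j\<in>I \<Longrightarrow> add_subgroup (A i j)"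
  using gm unfolding gm_ring_def by simp
lemma A0[simp]: "i\<in>I \<Longrightarrow> j\<in>I \<Longrightarrow> 0 \<in> A i j"
  using sub unfolding add_subgroup_def by blast
lemma Aadd[simp]: "i\<in>I \<Longrightarrow> j\<in>I \<Longrightarrow> x \<in> A i j \<Longrightarrow> y \<in> A i j \<Longrightarrow> x + y \<in> A i j"
  using sub unfolding add_subgroup_def by blast
lemma Aneg[simp]: "i\<in>I \<Longrightarrow> j\<in>I \<Longrightarrow> x \<in> A i j \<Longrightarrow> - x \<in> A i j"
  using sub unfolding add_subgroup_def by blast
lemma Adiff[simp]: "i\<in>I \<Longrightarrow> j\<in>I \<Longrightarrow> x \<in> A i j \<Longrightarrow> y \<in> A i j \<Longrightarrow> x - y \<in> A i j"
  by (metis Aadd Aneg diff_conv_add_uminus)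
lemma Asum: "i\<in>I \<Longrightarrow> j\<in>I \<Longrightarrow> (\<And>k. k\<in>K \<Longrightarrow> f k \<in> A i j) \<Longrightarrow> sum f K \<in> A i j"
  by (induction K rule: infinite_finite_induct) auto
lemma mcl[simp]: "i\<in>I \<Longrightarrow> j\<in>I \<Longrightarrow> l\<in>I \<Longrightarrow> x \<in> A i j \<Longrightarrow> y \<in> A j l \<Longrightarrow> m i j l x y \<in> A i l"
  using gm unfolding gm_ring_def by simp
lemma madd_l: "i\<in>I \<Longrightarrow> j\<in>I \<Longrightarrow> l\<in>I \<Longrightarrow> x \<in> A i j \<Longrightarrow> x' \<in> A i j \<Longrightarrow> y \<in> A j l \<Longrightarrow>
   m i j l (x + x') y = m i j l x y + m i j l x' y"
  using gm unfolding gm_ring_def by simp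
lemma madd_r: "i\<in>I \<Longrightarrow> j\<in>I \<Longrightarrow> l\<in>I \<Longrightarrow> x \<in> A i j \<Longrightarrow> y \<in> A j l \<Longrightarrow> y' \<in> A j l \<Longrightarrow>
   m i j l x (y + y') = m i j l x y + m i j l x y'"
  using gm unfolding gm_ring_def by simp
lemma massoc: "i\<in>I \<Longrightarrow> j\<in>I \<Longrightarrow> k\<in>I \<Longrightarrow> l\<in>I \<Longrightarrow> x \<in> A i j \<Longrightarrow> y \<in> A j k \<Longrightarrow> z \<in> A k l \<Longrightarrow>
   m i k l (m i j k x y) z = m i j l x (m j k l y z)"
  using gm unfolding gm_ring_def by simp
lemma m0l[simp]: "i\<in>I \<Longrightarrow> j\<in>I \<Longrightarrow> l\<in>I \<Longrightarrow> y \<in> A j l \<Longrightarrow> m i j l 0 y = 0"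
  using madd_l[of i j l 0 0 y] by simp
lemma m0r[simp]: "i\<in>I \<Longrightarrow> j\<in>I \<Longrightarrow> l\<in>I \<Longrightarrow> x \<in> A i j \<Longrightarrow> m i j l x 0 = 0"
  using madd_r[of i j l x 0 0] by simp
lemma msum_l: "i\<in>I \<Longrightarrow> j\<in>I \<Longrightarrow> l\<in>I \<Longrightarrow> (\<And>k. k\<in>K \<Longrightarrow> f k \<in> A i j) \<Longrightarrow> y \<in> A j l \<Longrightarrow>
   m i j l (sum f K) y = (\<Sum>k\<in>K. m i j l (f k) y)"
proof (induction K rule: infinite_finite_induct)
  case (insert k F)
  then show ?case by (simp add: madd_l Asum)
qed auto
lemma msum_r: "i\<in>I \<Longrightarrow> j\<in>I \<Longrightarrow> l\<in>I \<Longrightarrow> (\<And>k. k\<in>K \<Longrightarrow> f k \<in> A j l) \<Longrightarrow> x \<in> A i j \<Longrightarrow>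
   m i j l x (sum f K) = (\<Sum>k\<in>K. m i j l x (f k))"
proof (induction K rule: infinite_finite_induct)
  case (insert k F)
  then show ?case by (simp add: madd_r Asum)
qed auto

lemma Cin: "x \<in> C \<Longrightarrow> i\<in>I \<Longrightarrow> j\<in>I \<Longrightarrow> x i j \<in> A i j"
  unfolding gm_carrier_def by (metis (mono_tags, lifting) mem_Collect_eq)
lemma Cout: "x \<in> C \<Longrightarrow> \<not> (i\<in>I \<and> j\<in>I) \<Longrightarrow> x i j = 0"
  unfolding gm_carrier_def by (metis (mono_tags, lifting) mem_Collect_eq)
lemma Cfin: "x \<in> C \<Longrightarrow> finite {(i, j). x i j \<noteq> 0}"
  unfolding gm_carrier_def by blast
lemma CI: "(\<And>i j. i\<in>I \<Longrightarrow> j\<in>I \<Longrightarrow> x i j \<in> A i j) \<Longrightarrow> (\<And>i j. \<not> (i\<in>I \<and> j\<in>I) \<Longrightarrow> x i j = 0)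
   \<Longrightarrow> finite {(i, j). x i j \<noteq> 0} \<Longrightarrow> x \<in> C"
  unfolding gm_carrier_def by auto

definition idx :: "('i \<Rightarrow> 'i \<Rightarrow> 'a) \<Rightarrow> 'i set" where
  "idx x = fst ` {(i, j). x i j \<noteq> 0} \<union> snd ` {(i, j). x i j \<noteq> 0}"

lemma idx_fin: "x \<in> C \<Longrightarrow> finite (idx x)"
  unfolding idx_def using Cfin by blast
lemma idx_sub: "x \<in> C \<Longrightarrow> idx x \<subseteq> I"
  unfolding idx_def using Cout by fastforce
lemma idx1: "x i j \<noteq> 0 \<Longrightarrow> i \<in> idx x"
  unfolding idx_def by force
lemma idx2: "x i j \<noteq> 0 \<Longrightarrow> j \<in> idx x"
  unfolding idx_def by force

lemma idx_add: "(x+y) i k \<noteq> 0 \<Longrightarrow> k \<in> idx x \<or> k \<in> idx y"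
  by (metis add.left_neutral idx2 plus_fun_apply)

lemma mult_K:
  assumes x: "x\<in>C" and y: "y\<in>C" and i: "i\<in>I" and j: "j\<in>I" and K: "finite K" "K \<subseteq> I"
    "{k\<in>I. x i k \<noteq> 0} \<subseteq> K"
  shows "mu x y i j = (\<Sum>k\<in>K. m i k j (x i k) (y k j))"
proof -
  have "mu x y i j = (\<Sum>k\<in>{k\<in>I. x i k \<noteq> 0}. m i k j (x i k) (y k j))"
    using i j unfolding gm_mult_def by simp
  also have "\<dots> = (\<Sum>k\<in>K. m i k j (x i k) (y k j))"
    apply (rule sum.mono_neutral_left[OF K(1) K(3)])
    using K(2) i j by (auto simp: Cin[OF y] subset_iff)
  finally show ?thesis .
qed

lemma mult_out: "\<not> (i\<in>I \<and> j\<in>I) \<Longrightarrow> mu x y i j = 0"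
  unfolding gm_mult_def by auto

lemma mult_nz:
  assumes x: "x\<in>C" and y: "y\<in>C" and nz: "mu x y i j \<noteq> 0"
  shows "i \<in> idx x \<and> j \<in> idx y \<and> i \<in> I \<and> j \<in> I"
proof -
  have ij: "i \<in> I" "j \<in> I" using nz mult_out by blast+
  have "{k\<in>I. x i k \<noteq> 0} \<noteq> {}"
    using nz unfolding gm_mult_def by (metis (no_types, lifting) sum.empty)
  then have "i \<in> idx x" using idx1 by blast
  moreover have "j \<in> idx y"
  proof (rule ccontr)
    assume "j \<notin> idx y"
    then have "\<forall>k. y k j = 0" using idx2 by metis
    then have "mu x y i j = 0" using ij x unfolding gm_mult_def by (simp add: Cin)
    then show False using nz by simp
  qed
  ultimately show ?thesis using ij by blast
qed

lemma mult_C: assumes x: "x\<in>C" and y: "y\<in>C" shows "mu x y \<in> C"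
proof (rule CI)
  fix i j assume ij: "i\<in>I" "j\<in>I"
  show "mu x y i j \<in> A i j" using ij x y unfolding gm_mult_def
    by (auto intro!: Asum simp: Cin)
next
  fix i j assume "\<not> (i\<in>I \<and> j\<in>I)" then show "mu x y i j = 0" by (rule mult_out)
next
  have "{(i, j). mu x y i j \<noteq> 0} \<subseteq> idx x \<times> idx y" using mult_nz x y by blast
  then show "finite {(i, j). mu x y i j \<noteq> 0}"
    using idx_fin x y by (meson finite_SigmaI finite_subset)
qed

lemma add_C: assumes x: "x\<in>C" and y: "y\<in>C" shows "x + y \<in> C"
proof (rule CI)
  show "finite {(i, j). (x + y) i j \<noteq> 0}"
    by (rule finite_subset[of _ "{(i, j). x i j \<noteq> 0} \<union> {(i, j). y i j \<noteq> 0}"])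
       (auto simp: Cfin x y)
qed (auto simp: Cin Cout x y)

lemma neg_C: assumes x: "x\<in>C" shows "- x \<in> C"
proof (rule CI)
  show "finite {(i, j). (- x) i j \<noteq> 0}" using Cfin[OF x] by simp
qed (auto simp: Cin Cout x)

lemma zero_C: "0 \<in> C"
  by (rule CI) auto

lemma distl: assumes x: "x\<in>C" and y: "y\<in>C" and z: "z\<in>C"
  shows "mu (x + y) z = mu x z + mu y z"
proof (intro ext)
  fix i j
  show "mu (x + y) z i j = (mu x z + mu y z) i j"
  proof (cases "i\<in>I \<and> j\<in>I")
    case True
    let ?K = "idx x \<union> idx y"
    have K: "finite ?K" "?K \<subseteq> I" using idx_fin idx_sub x y by auto
    have s: "{k\<in>I. (x+y) i k \<noteq> 0} \<subseteq> ?K" "{k\<in>I. x i k \<noteq> 0} \<subseteq> ?K" "{k\<in>I. y i k \<noteq> 0} \<subseteq> ?K"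
      using idx2 idx_add by fastforce+
    have "mu (x + y) z i j = (\<Sum>k\<in>?K. m i k j ((x+y) i k) (z k j))"
      using mult_K[OF add_C[OF x y] z _ _ K s(1)] True by blast
    also have "\<dots> = (\<Sum>k\<in>?K. m i k j (x i k) (z k j)) + (\<Sum>k\<in>?K. m i k j (y i k) (z k j))"
      unfolding sum.distrib[symmetric]
      apply (rule sum.cong[OF refl])
      using K True x y z by (auto simp: madd_l Cin)
    also have "\<dots> = mu x z i j + mu y z i j"
      using mult_K[OF x z _ _ K s(2)] mult_K[OF y z _ _ K s(3)] True by simp
    finally show ?thesis by simp
  qed (simp add: mult_out)
qed

lemma distr: assumes x: "x\<in>C" and y: "y\<in>C" and z: "z\<in>C"
  shows "mu x (y + z) = mu x y + mu x z"
proof (intro ext)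
  fix i j
  show "mu x (y + z) i j = (mu x y + mu x z) i j"
  proof (cases "i\<in>I \<and> j\<in>I")
    case True
    let ?K = "idx x"
    have K: "finite ?K" "?K \<subseteq> I" using idx_fin idx_sub x by auto
    have s: "{k\<in>I. x i k \<noteq> 0} \<subseteq> ?K"
      using idx2 by fastforce+
    have "mu x (y + z) i j = (\<Sum>k\<in>?K. m i k j (x i k) ((y+z) k j))"
      using mult_K[OF x add_C[OF y z] _ _ K s] True by blast
    also have "\<dots> = (\<Sum>k\<in>?K. m i k j (x i k) (y k j)) + (\<Sum>k\<in>?K. m i k j (x i k) (z k j))"
      unfolding sum.distrib[symmetric]
      apply (rule sum.cong[OF refl])
      using K True x y z by (auto simp: madd_r Cin)
    also have "\<dots> = mu x y i j + mu x z i j"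
      using mult_K[OF x y _ _ K s] mult_K[OF x z _ _ K s] True by simp
    finally show ?thesis by simp
  qed (simp add: mult_out)
qed

lemma assoc: assumes x: "x\<in>C" and y: "y\<in>C" and z: "z\<in>C"
  shows "mu (mu x y) z = mu x (mu y z)"
proof (intro ext)
  fix i j
  show "mu (mu x y) z i j = mu x (mu y z) i j"
  proof (cases "i\<in>I \<and> j\<in>I")
    case True
    let ?K = "idx x \<union> idx y"
    have K: "finite ?K" "?K \<subseteq> I" using idx_fin idx_sub x y by auto
    have s1: "{k\<in>I. mu x y i k \<noteq> 0} \<subseteq> ?K" using mult_nz[OF x y] by blast
    have s2: "\<And>i. {k\<in>I. x i k \<noteq> 0} \<subseteq> ?K" "\<And>i. {k\<in>I. y i k \<noteq> 0} \<subseteq> ?K"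
      using idx2 by fastforce+
    have "mu (mu x y) z i j = (\<Sum>l\<in>?K. m i l j (mu x y i l) (z l j))"
      using mult_K[OF mult_C[OF x y] z _ _ K s1] True by blast
    also have "\<dots> = (\<Sum>l\<in>?K. m i l j (\<Sum>k\<in>?K. m i k l (x i k) (y k l)) (z l j))"
      apply (rule sum.cong[OF refl])
      using mult_K[OF x y _ _ K s2(1)] K True by auto
    also have "\<dots> = (\<Sum>l\<in>?K. \<Sum>k\<in>?K. m i l j (m i k l (x i k) (y k l)) (z l j))"
      apply (rule sum.cong[OF refl])
      apply (rule msum_l)
      using K True x y z by (fastforce intro: mcl Cin)+
    also have "\<dots> = (\<Sum>l\<in>?K. \<Sum>k\<in>?K. m i k j (x i k) (m k l j (y k l) (z l j)))"
      apply (intro sum.cong[OF refl])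
      apply (rule massoc)
      using K True x y z by (fastforce intro: mcl Cin)+
    also have "\<dots> = (\<Sum>k\<in>?K. \<Sum>l\<in>?K. m i k j (x i k) (m k l j (y k l) (z l j)))"
      by (rule sum.swap)
    also have "\<dots> = (\<Sum>k\<in>?K. m i k j (x i k) (\<Sum>l\<in>?K. m k l j (y k l) (z l j)))"
      apply (rule sum.cong[OF refl])
      apply (rule msum_r[symmetric])
      using K True x y z by (fastforce intro: mcl Cin)+
    also have "\<dots> = (\<Sum>k\<in>?K. m i k j (x i k) (mu y z k j))"
      apply (rule sum.cong[OF refl])
      using mult_K[OF y z _ _ K s2(2)] K True by auto
    also have "\<dots> = mu x (mu y z) i j"
      using mult_K[OF x mult_C[OF y z] _ _ K s2(1)] True by simp
    finally show ?thesis .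
  qed (simp add: mult_out)
qed

sublocale pr: prering C mu
  by unfold_locales (auto simp: add_C neg_C mult_C distl distr assoc)

end
context gmr begin

lemma gm_add_eq: "gm_add x y = x + y" unfolding gm_add_def by (intro ext) simp
lemma gm_neg_eq: "gm_neg x = - x" unfolding gm_neg_def by (intro ext) simp
lemma gm_zero_eq: "gm_zero = 0" unfolding gm_zero_def by (intro ext) simp

lemma mult_zero_l: "mu 0 y = 0" unfolding gm_mult_def by (intro ext) simp

lemma row0: "x\<in>C \<Longrightarrow> y\<in>C \<Longrightarrow> (\<And>k. x p k = 0) \<Longrightarrow> mu x y p q = 0"
  unfolding gm_mult_def by simp

lemma col0: assumes "x\<in>C" "y\<in>C" "\<And>k. y k q = 0" shows "mu x y p q = 0"
  using assms unfolding gm_mult_def by (auto simp: Cin intro!: sum.neutral)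

lemma L1:
  assumes x: "x\<in>C" and y: "y\<in>C" and pqj: "p\<in>I" "q\<in>I" "j\<in>I"
    and h: "\<And>k. k \<noteq> j \<Longrightarrow> x p k = 0 \<or> y k q = 0"
  shows "mu x y p q = m p j q (x p j) (y j q)"
proof -
  let ?K = "insert j {k\<in>I. x p k \<noteq> 0}"
  have fin: "finite {k\<in>I. x p k \<noteq> 0}"
    by (rule finite_subset[OF _ idx_fin[OF x]]) (auto intro: idx2)
  have "mu x y p q = (\<Sum>k\<in>?K. m p k q (x p k) (y k q))"
    by (rule mult_K[OF x y pqj(1,2)]) (use fin pqj in auto)
  also have "\<dots> = m p j q (x p j) (y j q) + (\<Sum>k\<in>?K-{j}. m p k q (x p k) (y k q))"
    using fin by (simp add: sum.insert_remove)
  also have "(\<Sum>k\<in>?K-{j}. m p k q (x p k) (y k q)) = 0"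
    apply (rule sum.neutral)
    using h pqj x y by (fastforce simp: Cin)
  finally show ?thesis by simp
qed

lemma mask_C: "x\<in>C \<Longrightarrow> (\<lambda>p q. if P p q then x p q else 0) \<in> C"
  apply (rule CI)
    apply (auto simp: Cin Cout)
  by (rule finite_subset[OF _ Cfin]) auto

lemma reg_0: "gm_vn_regular I A m 0"
  unfolding gm_vn_regular_def using zero_C mult_zero_l by metis

lemma reg_step:
  assumes x: "x\<in>C" and y: "y\<in>C" and z: "gm_vn_regular I A m (x - mu (mu x y) x)"
  shows "gm_vn_regular I A m x"
proof -
  from z obtain w where w: "w\<in>C" and e: "x - mu (mu x y) x = mu (mu (x - mu (mu x y) x) w) (x - mu (mu x y) x)"
    unfolding gm_vn_regular_def by blast
  from pr.reg_lift[OF x y w e] show ?thesis unfolding gm_vn_regular_def by metis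
qed

end

locale gmd = gmr I A m for I :: "'i set" and A :: "'i \<Rightarrow> 'i \<Rightarrow> 'a::ab_group_add set"
    and m :: "'i \<Rightarrow> 'i \<Rightarrow> 'i \<Rightarrow> 'a \<Rightarrow> 'a \<Rightarrow> 'a" +
  fixes D :: "'i \<Rightarrow> 'i \<Rightarrow> 'a set"
  assumes D_ideal: "gm_ideal I A m (gm_sum_set I A D)"
    and D_rn: "\<forall>i\<in>I. \<forall>j\<in>I. D i j \<subseteq> comp_rn A m i j"
begin

abbreviation "DD \<equiv> gm_sum_set I A D"

lemma DD_C: "x \<in> DD \<Longrightarrow> x \<in> C" unfolding gm_sum_set_def by blast
lemma DD_in: "x \<in> DD \<Longrightarrow> i\<in>I \<Longrightarrow> j\<in>I \<Longrightarrow> x i j \<in> D i j" unfolding gm_sum_set_def by blast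
lemma D0: "i\<in>I \<Longrightarrow> j\<in>I \<Longrightarrow> 0 \<in> D i j"
  using D_ideal DD_in[of gm_zero] unfolding gm_ideal_def gm_zero_def by auto
lemma DD_diff: "x \<in> DD \<Longrightarrow> y \<in> DD \<Longrightarrow> x - y \<in> DD"
  using D_ideal unfolding gm_ideal_def gm_add_eq gm_neg_eq by (metis diff_conv_add_uminus)
lemma DD_ml: "x \<in> DD \<Longrightarrow> y \<in> C \<Longrightarrow> mu x y \<in> DD"
  using D_ideal unfolding gm_ideal_def by blast
lemma DD_mr: "x \<in> DD \<Longrightarrow> y \<in> C \<Longrightarrow> mu y x \<in> DD"
  using D_ideal unfolding gm_ideal_def by blast
lemma mask_D: "x\<in>DD \<Longrightarrow> (\<lambda>p q. if P p q then x p q else 0) \<in> DD"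
  unfolding gm_sum_set_def using mask_C[of x P] DD_C DD_in D0 by auto

lemma DD_xyx: "x \<in> DD \<Longrightarrow> y \<in> C \<Longrightarrow> x - mu (mu x y) x \<in> DD"
  by (meson DD_C DD_diff DD_ml DD_mr mult_C)

lemma single_row:
  "\<forall>x. x \<in> DD \<longrightarrow> i \<in> I \<longrightarrow> (\<forall>p q. p \<noteq> i \<longrightarrow> x p q = 0) \<longrightarrow> card {q. x i q \<noteq> 0} = n
     \<longrightarrow> gm_vn_regular I A m x"
proof (induction n rule: less_induct)
  case (less n)
  show ?case
  proof (intro allI impI)
    fix x assume xD: "x \<in> DD" and i: "i \<in> I" and rows: "\<forall>p q. p \<noteq> i \<longrightarrow> x p q = 0"
      and cn: "card {q. x i q \<noteq> 0} = n"
    have x: "x \<in> C" using DD_C xD .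
    have fin: "finite {q. x i q \<noteq> 0}"
      by (rule finite_subset[OF _ idx_fin[OF x]]) (auto intro: idx2)
    show "gm_vn_regular I A m x"
    proof (cases "{q. x i q \<noteq> 0} = {}")
      case True
      then have "x = 0" using rows by (intro ext) auto
      then show ?thesis using reg_0 by simp
    next
      case False
      then obtain j where xij: "x i j \<noteq> 0" by blast
      have j: "j \<in> I" using xij Cout[OF x] i by blast
      have "x i j \<in> comp_rn A m i j" using D_rn DD_in[OF xD i j] i j by blast
      then have "comp_vn_regular A m i j (x i j)" unfolding comp_rn_def by blast
      then obtain g where g: "g \<in> A j i" and eg: "x i j = m i i j (m i j i (x i j) g) (x i j)"
        unfolding comp_vn_regular_def by blast
      define y where "y = (\<lambda>k l. if k = j \<and> l = i then g else 0)"
      have y: "y \<in> C"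
        apply (rule CI)
          apply (auto simp: y_def g i j)
        by (rule finite_subset[of _ "{(j,i)}"]) auto
      define w where "w = mu x y"
      have w: "w \<in> C" unfolding w_def using mult_C x y by blast
      have w_col: "\<And>p l. l \<noteq> i \<Longrightarrow> w p l = 0"
        unfolding w_def by (rule col0[OF x y]) (simp add: y_def)
      have w_row: "\<And>p l. p \<noteq> i \<Longrightarrow> w p l = 0"
        unfolding w_def by (rule row0[OF x y]) (simp add: rows)
      have wii: "w i i = m i j i (x i j) g"
        unfolding w_def by (subst L1[OF x y i i j]) (auto simp: y_def)
      have wx: "\<And>q. q \<in> I \<Longrightarrow> mu w x i q = m i i q (w i i) (x i q)"
        by (rule L1[OF w x i _ i]) (auto simp: w_col)
      define z where "z = x - mu w x"
      have zD: "z \<in> DD" unfolding z_def w_def using DD_xyx[OF xD y] .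
      have z_rows: "\<forall>p q. p \<noteq> i \<longrightarrow> z p q = 0"
        unfolding z_def using rows row0[OF w x] w_row by simp
      have zij: "z i j = 0" unfolding z_def using wx[OF j] wii eg by simp
      have sub: "{q. z i q \<noteq> 0} \<subseteq> {q. x i q \<noteq> 0} - {j}"
      proof
        fix q assume "q \<in> {q. z i q \<noteq> 0}"
        then have zq: "z i q \<noteq> 0" by simp
        have q: "q \<in> I"
        proof (rule ccontr)
          assume "q \<notin> I"
          then have "x i q = 0" "mu w x i q = 0" using Cout[OF x] mult_out by auto
          then show False using zq unfolding z_def by simp
        qed
        have "x i q \<noteq> 0"
        proof
          assume "x i q = 0"
          then have "mu w x i q = 0" using wx[OF q] i q Cin[OF w] by simp
          then show False using zq \<open>x i q = 0\<close> unfolding z_def by simp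
        qed
        then show "q \<in> {q. x i q \<noteq> 0} - {j}" using zq zij by auto
      qed
      have "card {q. z i q \<noteq> 0} < n"
        unfolding cn[symmetric]
        by (rule psubset_card_mono[OF fin]) (use sub xij in blast)
      with less zD i z_rows have "gm_vn_regular I A m z" by blast
      then show ?thesis using reg_step[OF x y] unfolding z_def w_def by blast
    qed
  qed
qed

lemma all_rows:
  "\<forall>x. x \<in> DD \<longrightarrow> card {p. \<exists>q. x p q \<noteq> 0} = n \<longrightarrow> gm_vn_regular I A m x"
proof (induction n rule: less_induct)
  case (less n)
  show ?case
  proof (intro allI impI)
    fix x assume xD: "x \<in> DD" and cn: "card {p. \<exists>q. x p q \<noteq> 0} = n"
    have x: "x \<in> C" using DD_C xD .
    have fin: "finite {p. \<exists>q. x p q \<noteq> 0}"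
      by (rule finite_subset[OF _ idx_fin[OF x]]) (auto intro: idx1)
    show "gm_vn_regular I A m x"
    proof (cases "{p. \<exists>q. x p q \<noteq> 0} = {}")
      case True
      then have "x = 0" by (intro ext) auto
      then show ?thesis using reg_0 by simp
    next
      case False
      then obtain i q0 where xiq: "x i q0 \<noteq> 0" by blast
      have i: "i \<in> I" using xiq Cout[OF x] by blast
      define r where "r = (\<lambda>p q. if p = i then x p q else 0)"
      have rD: "r \<in> DD" unfolding r_def by (rule mask_D[OF xD])
      have r: "r \<in> C" using DD_C rD .
      have "gm_vn_regular I A m r"
        using single_row[of i "card {q. r i q \<noteq> 0}"] rD i by (auto simp: r_def)
      then obtain y where y: "y \<in> C" and ry: "r = mu (mu r y) r"
        unfolding gm_vn_regular_def by blast
      define y2 where "y2 = (\<lambda>k l. if l = i then y k l else 0)"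
      have y2: "y2 \<in> C" unfolding y2_def by (rule mask_C[OF y])
      have xy2: "x \<in> C" "mu x y2 \<in> C" using x y2 mult_C by auto
      have a: "\<And>p l. l \<noteq> i \<Longrightarrow> mu x y2 p l = 0"
        by (rule col0[OF x y2]) (simp add: y2_def)
      have b: "mu x y2 i i = mu r y i i"
        unfolding gm_mult_def r_def y2_def by simp
      have rowi: "\<And>q. mu (mu x y2) x i q = x i q"
      proof -
        fix q show "mu (mu x y2) x i q = x i q"
        proof (cases "q \<in> I")
          case q: True
          have "mu (mu x y2) x i q = m i i q (mu x y2 i i) (x i q)"
            by (rule L1[OF xy2(2) x i q i]) (auto simp: a)
          also have "\<dots> = m i i q (mu r y i i) (r i q)" using b by (simp add: r_def)
          also have "\<dots> = mu (mu r y) r i q"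
            by (rule L1[OF mult_C[OF r y] r i q i, symmetric]) (auto simp: r_def)
          also have "\<dots> = r i q" using ry by simp
          finally show ?thesis by (simp add: r_def)
        next
          case False
          then show ?thesis using mult_out Cout[OF x] by auto
        qed
      qed
      define z where "z = x - mu (mu x y2) x"
      have zD: "z \<in> DD" unfolding z_def using DD_xyx[OF xD y2] .
      have sub: "{p. \<exists>q. z p q \<noteq> 0} \<subseteq> {p. \<exists>q. x p q \<noteq> 0} - {i}"
      proof
        fix p assume "p \<in> {p. \<exists>q. z p q \<noteq> 0}"
        then obtain q where zq: "z p q \<noteq> 0" by blast
        have pi: "p \<noteq> i" using zq rowi unfolding z_def by auto
        have "\<exists>q. x p q \<noteq> 0"
        proof (rule ccontr)
          assume "\<not> (\<exists>q. x p q \<noteq> 0)"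
          then have "\<And>k. x p k = 0" by blast
          moreover have "\<And>k. mu x y2 p k = 0" using row0[OF x y2] calculation by blast
          ultimately have "z p q = 0" unfolding z_def using row0[OF xy2(2) x] by simp
          then show False using zq by simp
        qed
        then show "p \<in> {p. \<exists>q. x p q \<noteq> 0} - {i}" using pi by blast
      qed
      have "card {p. \<exists>q. z p q \<noteq> 0} < n"
        unfolding cn[symmetric]
        by (rule psubset_card_mono[OF fin]) (use sub xiq in blast)
      with less zD have "gm_vn_regular I A m z" by blast
      then show ?thesis using reg_step[OF x y2] unfolding z_def by blast
    qed
  qed
qed

end
theorem lemma2p2:
  fixes I :: "'i set" and A :: "'i \<Rightarrow> 'i \<Rightarrow> 'a::ab_group_add set"
    and m :: "'i \<Rightarrow> 'i \<Rightarrow> 'i \<Rightarrow> 'a \<Rightarrow> 'a \<Rightarrow> 'a"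
    and D :: "'i \<Rightarrow> 'i \<Rightarrow> 'a set"
  assumes gm: "gm_ring I A m"
    and D_sub: "\<forall>i\<in>I. \<forall>j\<in>I. D i j \<subseteq> A i j"
    and D_ideal: "gm_ideal I A m (gm_sum_set I A D)"
    and D_rn: "\<forall>i\<in>I. \<forall>j\<in>I. D i j \<subseteq> comp_rn A m i j"
  shows "(\<forall>x\<in>gm_sum_set I A D. gm_vn_regular I A m x) \<and> gm_sum_set I A D \<subseteq> gm_rn I A m"
proof -
  interpret g: gmd I A m D
    by (simp add: gmd_def gmr_def gmd_axioms_def gm D_ideal D_rn)
  have reg: "\<forall>x\<in>gm_sum_set I A D. gm_vn_regular I A m x"
    using g.all_rows by blast
  moreover have "gm_sum_set I A D \<subseteq> gm_rn I A m"
    unfolding gm_rn_def using reg D_ideal by blast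
  ultimately show ?thesis by blast
qed

end
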